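(* Let $X$ be a finite set with similarity function $S$, suppose the target clustering $\mathcal{C}^{\ast}$ satisfies stability with respect to $S$, and suppose the initial clustering has correlation-clustering error $\delta_{cc}$. In the $\eta$-merge model, for any $\eta>2/3$, the interactive algorithm using the global split procedure and the correlation-clustering merge procedure (described below) requires at most $\delta_{cc}$ edit requests to find the target clustering.
   Context: For nonempty $A,A'\subseteq X$, $S(A,A')$ is the average of $S(x,y)$ over $x\in A,y\in A'$. $\mathcal{C}^{\ast}=\{C^{\ast}_1,\dots,C^{\ast}_k\}$ satisfies stability w.r.t. $S$ if for all $i\neq j$, every nonempty proper $A\subset C^{\ast}_i$ and nonempty $A'\subseteq C^{\ast}_j$: $S(A,C^{\ast}_i\setminus A)>S(A,A')$. For a clustering $\mathcal{C}$, $\delta_{cc}=|\{(u,v)\in X\times X: c(u,v)\neq c^{\ast}(u,v)\}|$, where $c(u,v)=1$ if $u,v$ lie in the same cluster of $\mathcal{C}$ and $0$ otherwise, and $c^{\ast}$ is defined likewise for $\mathcal{C}^{\ast}$. Average-linkage tree $T_{glob}$: leaves are singletons; repeatedly merge the two current nodes $N_1,N_2$ with largest $S(N_1,N_2)$ (ties arbitrary) into parent $N_1\cup N_2$ until the root $X$ remains. Process ($\eta$-merge model): starting from the initial clustering, an oracle repeatedly issues split$(C_i)$ (only if current cluster $C_i$ contains points from two or more target clusters) or merge$(C_i,C_j)$ for distinct current clusters (only if some target cluster $C^{\ast}_l$ has $|C_i\cap C^{\ast}_l|\ge\eta|C_i|$ and $|C_j\cap C^{\ast}_l|\ge\eta|C_j|$).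 Split procedure: let $N$ be the deepest node of $T_{glob}$ containing $C_i$, with children $N_1,N_2$; replace $C_i$ by $C_i\cap N_1$ and $C_i\cap N_2$. Correlation-clustering merge procedure: find a node $N$ of $T_{glob}$ of maximal depth with $|N\cap C_i|\ge\eta|C_i|$ and $|N\cap C_j|\ge\eta|C_j|$; if $|C_i|\ge|C_j|$, replace $C_i$ by $C_i\cup(N\cap C_j)$ and $C_j$ by $C_j\setminus N$; otherwise replace $C_i$ by $C_i\setminus N$ and $C_j$ by $C_j\cup(N\cap C_i)$ (empty clusters are discarded). The bound is on the number of requests before the current clustering equals $\mathcal{C}^{\ast}$, for any sequence of allowed requests. *)

theory Defs
  imports Complex_Main
begin

definition avg_sim :: "('a \<Rightarrow> 'a \<Rightarrow> real) \<Rightarrow> 'a set \<Rightarrow> 'a set \<Rightarrow> real" where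
  "avg_sim S A B = (\<Sum>x\<in>A. \<Sum>y\<in>B. S x y) / (real (card A) * real (card B))"

definition is_clustering :: "'a set \<Rightarrow> 'a set set \<Rightarrow> bool" where
  "is_clustering X P \<longleftrightarrow> \<Union>P = X \<and> {} \<notin> P \<and>
     (\<forall>A\<in>P. \<forall>B\<in>P. A \<noteq> B \<longrightarrow> A \<inter> B = {})"

definition target_stable :: "('a \<Rightarrow> 'a \<Rightarrow> real) \<Rightarrow> 'a set set \<Rightarrow> bool" where
  "target_stable S Cs \<longleftrightarrow> (\<forall>Ci\<in>Cs. \<forall>Cj\<in>Cs. Ci \<noteq> Cj \<longrightarrow>
     (\<forall>A A'. A \<noteq> {} \<and> A \<subset> Ci \<and> A' \<noteq> {} \<and> A' \<subseteq> Cj \<longrightarrow>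
        avg_sim S A (Ci - A) > avg_sim S A A'))"

definition same_cluster :: "'a set set \<Rightarrow> 'a \<Rightarrow> 'a \<Rightarrow> bool" where
  "same_cluster P u v \<longleftrightarrow> (\<exists>C\<in>P. u \<in> C \<and> v \<in> C)"

text \<open>Correlation-clustering error (ordered pairs).\<close>
definition delta_cc :: "'a set \<Rightarrow> 'a set set \<Rightarrow> 'a set set \<Rightarrow> nat" where
  "delta_cc X P Q = card {(u,v) \<in> X \<times> X. same_cluster P u v \<noteq> same_cluster Q u v}"

text \<open>An average-linkage tree is represented by the sequence of partitions Ps produced by the
  merging process: Ps!0 are the singletons, the last entry is {X}, and each step merges two
  distinct current nodes of maximal average similarity (ties broken arbitrarily).\<close>
definition avg_linkage_run :: "('a \<Rightarrow> 'a \<Rightarrow> real) \<Rightarrow> 'a set \<Rightarrow> 'a set set list \<Rightarrow> bool" where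
  "avg_linkage_run S X Ps \<longleftrightarrow> Ps \<noteq> [] \<and> hd Ps = (\<lambda>x. {x}) ` X \<and> last Ps = {X} \<and>
     (\<forall>i. Suc i < length Ps \<longrightarrow>
        (\<exists>N1 N2. N1 \<in> Ps!i \<and> N2 \<in> Ps!i \<and> N1 \<noteq> N2 \<and>
           Ps!(Suc i) = insert (N1 \<union> N2) (Ps!i - {N1, N2}) \<and>
           (\<forall>M1\<in>Ps!i. \<forall>M2\<in>Ps!i. M1 \<noteq> M2 \<longrightarrow> avg_sim S M1 M2 \<le> avg_sim S N1 N2)))"

definition tree_nodes :: "'a set set list \<Rightarrow> 'a set set" where
  "tree_nodes Ps = \<Union>(set Ps)"

definition tree_children :: "'a set set list \<Rightarrow> 'a set \<Rightarrow> 'a set \<Rightarrow> 'a set \<Rightarrow> bool" where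
  "tree_children Ps N N1 N2 \<longleftrightarrow> (\<exists>i. Suc i < length Ps \<and> N1 \<in> Ps!i \<and> N2 \<in> Ps!i \<and> N1 \<noteq> N2 \<and>
     N = N1 \<union> N2 \<and> Ps!(Suc i) = insert N (Ps!i - {N1, N2}))"

definition node_depth :: "'a set set list \<Rightarrow> 'a set \<Rightarrow> nat" where
  "node_depth Ps N = card {M \<in> tree_nodes Ps. N \<subset> M}"

definition deepest_containing :: "'a set set list \<Rightarrow> 'a set \<Rightarrow> 'a set \<Rightarrow> bool" where
  "deepest_containing Ps C N \<longleftrightarrow> N \<in> tree_nodes Ps \<and> C \<subseteq> N \<and>
     (\<forall>M\<in>tree_nodes Ps. C \<subseteq> M \<longrightarrow> node_depth Ps M \<le> node_depth Ps N)"

definition eta_ok :: "real \<Rightarrow> 'a set \<Rightarrow> 'a set \<Rightarrow> bool" where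
  "eta_ok eta N C \<longleftrightarrow> real (card (N \<inter> C)) \<ge> eta * real (card C)"

text \<open>Split request (allowed only for impure clusters) with the global split procedure.\<close>
definition split_step :: "'a set set list \<Rightarrow> 'a set set \<Rightarrow> 'a set set \<Rightarrow> 'a set set \<Rightarrow> bool" where
  "split_step Ps Cstar P P' \<longleftrightarrow> (\<exists>Ci\<in>P.
     (\<exists>l1\<in>Cstar. \<exists>l2\<in>Cstar. l1 \<noteq> l2 \<and> Ci \<inter> l1 \<noteq> {} \<and> Ci \<inter> l2 \<noteq> {}) \<and>
     (\<exists>N N1 N2. deepest_containing Ps Ci N \<and> tree_children Ps N N1 N2 \<and>
        P' = (P - {Ci}) \<union> ({Ci \<inter> N1, Ci \<inter> N2} - {{}})))"

text \<open>Merge request (allowed in the eta-merge model) with the correlation-clustering merge procedure.\<close>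
definition merge_step :: "real \<Rightarrow> 'a set set list \<Rightarrow> 'a set set \<Rightarrow> 'a set set \<Rightarrow> 'a set set \<Rightarrow> bool" where
  "merge_step eta Ps Cstar P P' \<longleftrightarrow> (\<exists>Ci\<in>P. \<exists>Cj\<in>P. Ci \<noteq> Cj \<and>
     (\<exists>l\<in>Cstar. eta_ok eta l Ci \<and> eta_ok eta l Cj) \<and>
     (\<exists>N. N \<in> tree_nodes Ps \<and> eta_ok eta N Ci \<and> eta_ok eta N Cj \<and>
        (\<forall>M\<in>tree_nodes Ps. eta_ok eta M Ci \<and> eta_ok eta M Cj \<longrightarrow> node_depth Ps M \<le> node_depth Ps N) \<and>
        P' = (if card Ci \<ge> card Cj
              then (P - {Ci, Cj}) \<union> ({Ci \<union> (N \<inter> Cj), Cj - N} - {{}})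
              else (P - {Ci, Cj}) \<union> ({Ci - N, Cj \<union> (N \<inter> Ci)} - {{}}))))"

definition edit_step :: "real \<Rightarrow> 'a set set list \<Rightarrow> 'a set set \<Rightarrow> 'a set set \<Rightarrow> 'a set set \<Rightarrow> bool" where
  "edit_step eta Ps Cstar P P' \<longleftrightarrow> split_step Ps Cstar P P' \<or> merge_step eta Ps Cstar P P'"

end

theory Submission
  imports Defs
begin


definition lam :: "'a set set \<Rightarrow> 'a set \<Rightarrow> bool" where
 "lam Cs n \<longleftrightarrow> (\<forall>T\<in>Cs. n \<inter> T = {} \<or> n \<subseteq> T \<or> T \<subseteq> n)"

lemma clus_sc: assumes "is_clustering X P" "C \<in> P" "u \<in> C"
  shows "same_cluster P u v \<longleftrightarrow> v \<in> C"
  using assms unfolding is_clustering_def same_cluster_def by blast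

lemma clus_sub: "is_clustering X P \<Longrightarrow> C \<in> P \<Longrightarrow> C \<subseteq> X"
  unfolding is_clustering_def by blast
lemma clus_ne: "is_clustering X P \<Longrightarrow> C \<in> P \<Longrightarrow> C \<noteq> {}"
  unfolding is_clustering_def by blast
lemma clus_ex: "is_clustering X P \<Longrightarrow> x \<in> X \<Longrightarrow> \<exists>C\<in>P. x \<in> C"
  unfolding is_clustering_def by blast
lemma clus_disj: "is_clustering X P \<Longrightarrow> A \<in> P \<Longrightarrow> B \<in> P \<Longrightarrow> A \<noteq> B \<Longrightarrow> A \<inter> B = {}"
  unfolding is_clustering_def by blast
lemma clus_finite: "finite X \<Longrightarrow> is_clustering X P \<Longrightarrow> finite P"
  by (rule finite_subset[of P "Pow X"]) (auto dest: clus_sub)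

lemma avg_swap: "avg_sim S A B = (\<Sum>y\<in>B. \<Sum>x\<in>A. S x y) / (real (card A) * real (card B))"
  unfolding avg_sim_def by (subst sum.swap) simp

lemma avg_sym: assumes "\<forall>x\<in>X. \<forall>y\<in>X. S x y = S y x" "A \<subseteq> X" "B \<subseteq> X"
  shows "avg_sim S A B = avg_sim S B A"
proof -
  have "(\<Sum>y\<in>B. \<Sum>x\<in>A. S x y) = (\<Sum>y\<in>B. \<Sum>x\<in>A. S y x)"
    using assms by (intro sum.cong refl) blast
  then show ?thesis unfolding avg_swap[of S A B] avg_sim_def[of S B A] by (simp add: mult.commute)
qed

lemma core:
  assumes finX: "finite X" and clS: "is_clustering X Cstar" and st: "target_stable S Cstar"
    and clP: "is_clustering X P" and lamP: "\<forall>n\<in>P. lam Cstar n"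
    and N1: "N1 \<in> P" and N2: "N2 \<in> P" and T: "T \<in> Cstar"
    and sub: "N1 \<subset> T" and dis: "N2 \<inter> T = {}"
    and mx: "\<forall>n\<in>P. n \<noteq> N1 \<longrightarrow> avg_sim S N1 n \<le> avg_sim S N1 N2"
  shows False
proof -
  define h where "h y = (\<Sum>x\<in>N1. S x y)" for y
  define a where "a = avg_sim S N1 (T - N1)"
  have fin1: "finite N1" using clus_sub[OF clP N1] finX finite_subset by blast
  have ne1: "N1 \<noteq> {}" using clus_ne[OF clP N1] .
  have c1: "real (card N1) > 0" using fin1 ne1 by (simp add: card_gt_0_iff)
  have fin2: "finite N2" using clus_sub[OF clP N2] finX finite_subset by blast
  have ne2: "N2 \<noteq> {}" using clus_ne[OF clP N2] .
  have c2: "real (card N2) > 0" using fin2 ne2 by (simp add: card_gt_0_iff)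
  have hy: "h y < a * card N1" if y: "y \<in> N2" for y
  proof -
    have "y \<in> X" using clus_sub[OF clP N2] y by blast
    then obtain Tj where Tj: "Tj \<in> Cstar" "y \<in> Tj" using clus_ex[OF clS] by blast
    have "Tj \<noteq> T" using dis y Tj by blast
    then have "avg_sim S N1 (T - N1) > avg_sim S N1 {y}"
      using st T Tj sub ne1 unfolding target_stable_def by blast
    moreover have "avg_sim S N1 {y} = h y / card N1" by (simp add: avg_sim_def h_def)
    ultimately show ?thesis using c1 by (simp add: a_def divide_less_eq)
  qed
  have lt: "avg_sim S N1 N2 < a"
  proof -
    have "(\<Sum>y\<in>N2. h y) < (\<Sum>y\<in>N2. a * card N1)"
      by (rule sum_strict_mono) (use fin2 ne2 hy in auto)
    then have "(\<Sum>y\<in>N2. h y) < a * card N1 * card N2" by (simp add: mult_ac)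
    then show ?thesis using avg_swap[of S N1 N2] c1 c2
      by (simp add: h_def divide_less_eq mult.commute mult.left_commute)
  qed
  define K where "K = {n\<in>P. n \<subseteq> T - N1}"
  have UK: "\<Union>K = T - N1"
  proof
    show "\<Union>K \<subseteq> T - N1" unfolding K_def by blast
    show "T - N1 \<subseteq> \<Union>K"
    proof
      fix y assume y: "y \<in> T - N1"
      have "y \<in> X" using clus_sub[OF clS T] y by blast
      then obtain n where n: "n \<in> P" "y \<in> n" using clus_ex[OF clP] by blast
      have "n \<noteq> N1" using n y by blast
      then have dn: "n \<inter> N1 = {}" using clus_disj[OF clP n(1) N1] by blast
      have "lam Cstar n" using lamP n by blast
      then have "n \<inter> T = {} \<or> n \<subseteq> T \<or> T \<subseteq> n" using T unfolding lam_def by blast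
      moreover have "\<not> T \<subseteq> n" using dn sub ne1 by blast
      ultimately have "n \<subseteq> T" using n y by blast
      then show "y \<in> \<Union>K" using n dn unfolding K_def by blast
    qed
  qed
  have finK: "finite K" using clus_finite[OF finX clP] unfolding K_def by simp
  have Kne: "K \<noteq> {}" using UK sub by blast
  have finn: "finite n" if "n \<in> K" for n
    using that clus_sub[OF clP] finX finite_subset unfolding K_def by blast
  have disjK: "\<forall>A\<in>K. \<forall>B\<in>K. A \<noteq> B \<longrightarrow> A \<inter> B = {}"
    using clus_disj[OF clP] unfolding K_def by blast
  have each: "(\<Sum>y\<in>n. h y) < a * card N1 * card n" if nK: "n \<in> K" for n
  proof -
    have nP: "n \<in> P" and nsub: "n \<subseteq> T - N1" using nK unfolding K_def by auto
    have nne: "n \<noteq> {}" using clus_ne[OF clP nP] .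
    have cn: "real (card n) > 0" using finn[OF nK] nne by (simp add: card_gt_0_iff)
    have "n \<noteq> N1" using nsub nne by blast
    then have "avg_sim S N1 n < a" using mx nP lt by fastforce
    then show ?thesis using avg_swap[of S N1 n] c1 cn
      by (simp add: h_def divide_less_eq mult.commute mult.left_commute)
  qed
  have "(\<Sum>y\<in>T-N1. h y) = (\<Sum>n\<in>K. \<Sum>y\<in>n. h y)"
    using sum.Union_disjoint[of K h] finn disjK UK by simp
  also have "\<dots> < (\<Sum>n\<in>K. a * card N1 * card n)"
    by (rule sum_strict_mono) (use finK Kne each in auto)
  also have "\<dots> = a * card N1 * (\<Sum>n\<in>K. card n)" by (simp add: sum_distrib_left)
  also have "(\<Sum>n\<in>K. card n) = card (T - N1)"
  proof -
    have "pairwise disjnt K" using disjK unfolding pairwise_def disjnt_def by blast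
    then show ?thesis using card_Union_disjoint[of K] finn UK by simp
  qed
  finally have A: "(\<Sum>y\<in>T-N1. h y) < a * card N1 * card (T - N1)" by simp
  have finT: "finite (T - N1)" using clus_sub[OF clS T] finX finite_subset by blast
  have cT: "real (card (T - N1)) > 0" using finT sub by (auto simp add: card_gt_0_iff)
  have "(\<Sum>y\<in>T-N1. h y) = a * card N1 * card (T - N1)"
    using avg_swap[of S N1 "T - N1"] c1 cT unfolding a_def h_def by simp
  with A show False by simp
qed


lemma tree_inv:
  assumes finX: "finite X" and sym: "\<forall>x\<in>X. \<forall>y\<in>X. S x y = S y x"
    and clS: "is_clustering X Cstar" and st: "target_stable S Cstar"
    and run: "avg_linkage_run S X Ps"
  shows "i < length Ps \<Longrightarrow> is_clustering X (Ps!i) \<and> (\<forall>n\<in>Ps!i. lam Cstar n)"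
proof (induction i)
  case 0
  have "Ps!0 = (\<lambda>x. {x}) ` X" using run unfolding avg_linkage_run_def by (metis hd_conv_nth)
  then show ?case unfolding is_clustering_def lam_def by auto
next
  case (Suc i)
  then have IH: "is_clustering X (Ps!i)" "\<forall>n\<in>Ps!i. lam Cstar n" by auto
  obtain N1 N2 where N: "N1 \<in> Ps!i" "N2 \<in> Ps!i" "N1 \<noteq> N2"
     and eq: "Ps!Suc i = insert (N1 \<union> N2) (Ps!i - {N1, N2})"
     and mx: "\<forall>M1\<in>Ps!i. \<forall>M2\<in>Ps!i. M1 \<noteq> M2 \<longrightarrow> avg_sim S M1 M2 \<le> avg_sim S N1 N2"
  proof -
    have si: "Suc i < length Ps" using Suc.prems .
    have H: "\<forall>i. Suc i < length Ps \<longrightarrow>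
        (\<exists>N1 N2. N1 \<in> Ps!i \<and> N2 \<in> Ps!i \<and> N1 \<noteq> N2 \<and>
           Ps!(Suc i) = insert (N1 \<union> N2) (Ps!i - {N1, N2}) \<and>
           (\<forall>M1\<in>Ps!i. \<forall>M2\<in>Ps!i. M1 \<noteq> M2 \<longrightarrow> avg_sim S M1 M2 \<le> avg_sim S N1 N2))"
      using run unfolding avg_linkage_run_def by (elim conjE)
    have "\<exists>N1 N2. N1 \<in> Ps!i \<and> N2 \<in> Ps!i \<and> N1 \<noteq> N2 \<and>
           Ps!(Suc i) = insert (N1 \<union> N2) (Ps!i - {N1, N2}) \<and>
           (\<forall>M1\<in>Ps!i. \<forall>M2\<in>Ps!i. M1 \<noteq> M2 \<longrightarrow> avg_sim S M1 M2 \<le> avg_sim S N1 N2)"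
      using H[rule_format, OF si] .
    then show ?thesis apply (elim exE conjE) apply (rule that) by assumption+
  qed
  have d12: "N1 \<inter> N2 = {}" using clus_disj[OF IH(1) N] .
  have cl: "is_clustering X (Ps!Suc i)"
    unfolding eq is_clustering_def
  proof (intro conjI ballI impI)
    have "\<Union>(insert (N1 \<union> N2) (Ps ! i - {N1, N2})) = \<Union>(Ps!i)"
      using N by auto
    then show "\<Union>(insert (N1 \<union> N2) (Ps ! i - {N1, N2})) = X"
      using IH(1) unfolding is_clustering_def by simp
    show "{} \<notin> insert (N1 \<union> N2) (Ps ! i - {N1, N2})"
      using clus_ne[OF IH(1)] N by auto
    fix A B assume "A \<in> insert (N1 \<union> N2) (Ps ! i - {N1, N2})" "B \<in> insert (N1 \<union> N2) (Ps ! i - {N1, N2})" "A \<noteq> B"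
    then consider "A = N1 \<union> N2" "B \<in> Ps!i" "B \<noteq> N1" "B \<noteq> N2"
      | "B = N1 \<union> N2" "A \<in> Ps!i" "A \<noteq> N1" "A \<noteq> N2" | "A \<in> Ps!i" "B \<in> Ps!i" by auto
    then show "A \<inter> B = {}"
    proof cases
      case 1 then show ?thesis using clus_disj[OF IH(1) _ 1(2)] N by blast
    next
      case 2 then show ?thesis using clus_disj[OF IH(1) _ 2(2)] N by blast
    next
      case 3 then show ?thesis using clus_disj[OF IH(1) 3] \<open>A \<noteq> B\<close> by blast
    qed
  qed
  have lamU: "lam Cstar (N1 \<union> N2)"
  proof (rule ccontr)
    assume "\<not> lam Cstar (N1 \<union> N2)"
    then obtain T where T: "T \<in> Cstar" and c: "(N1\<union>N2) \<inter> T \<noteq> {}" "\<not> N1\<union>N2 \<subseteq> T" "\<not> T \<subseteq> N1 \<union> N2"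
      unfolding lam_def by blast
    have l1: "N1 \<inter> T = {} \<or> N1 \<subseteq> T \<or> T \<subseteq> N1" using IH(2) N(1) T unfolding lam_def by blast
    have l2: "N2 \<inter> T = {} \<or> N2 \<subseteq> T \<or> T \<subseteq> N2" using IH(2) N(2) T unfolding lam_def by blast
    have "(N1 \<subset> T \<and> N2 \<inter> T = {}) \<or> (N2 \<subset> T \<and> N1 \<inter> T = {})" using l1 l2 c by blast
    then show False
    proof
      assume a: "N1 \<subset> T \<and> N2 \<inter> T = {}"
      have m: "\<forall>n\<in>Ps!i. n \<noteq> N1 \<longrightarrow> avg_sim S N1 n \<le> avg_sim S N1 N2"
        using mx N(1) by blast
      show False using core[OF finX clS st IH(1) IH(2) N(1) N(2) T _ _ m] a by blast
    next
      assume a: "N2 \<subset> T \<and> N1 \<inter> T = {}"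
      have e: "avg_sim S N1 N2 = avg_sim S N2 N1"
        by (rule avg_sym[OF sym]) (use clus_sub[OF IH(1)] N in auto)
      have m: "\<forall>n\<in>Ps!i. n \<noteq> N2 \<longrightarrow> avg_sim S N2 n \<le> avg_sim S N2 N1"
        using mx N(2) unfolding e[symmetric] by blast
      show False using core[OF finX clS st IH(1) IH(2) N(2) N(1) T _ _ m] a by blast
    qed
  qed
  show ?case using cl lamU IH(2) unfolding eq by blast
qed


definition tree_ok :: "'a set \<Rightarrow> 'a set set \<Rightarrow> 'a set set list \<Rightarrow> bool" where
  "tree_ok X Cstar Ps \<longleftrightarrow> (\<forall>i<length Ps. is_clustering X (Ps!i) \<and> (\<forall>n\<in>Ps!i. lam Cstar n))"

lemma tree_ok:
  assumes "finite X" "\<forall>x\<in>X. \<forall>y\<in>X. S x y = S y x"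
    "is_clustering X Cstar" "target_stable S Cstar" "avg_linkage_run S X Ps"
  shows "tree_ok X Cstar Ps"
  using tree_inv[OF assms] unfolding tree_ok_def by blast

lemma run_step:
  assumes run: "avg_linkage_run S X Ps" and si: "Suc i < length Ps"
  obtains N1 N2 where "N1 \<in> Ps!i" "N2 \<in> Ps!i" "N1 \<noteq> N2" "Ps!Suc i = insert (N1 \<union> N2) (Ps!i - {N1, N2})"
proof -
  have H: "\<forall>i. Suc i < length Ps \<longrightarrow>
        (\<exists>N1 N2. N1 \<in> Ps!i \<and> N2 \<in> Ps!i \<and> N1 \<noteq> N2 \<and>
           Ps!(Suc i) = insert (N1 \<union> N2) (Ps!i - {N1, N2}) \<and>
           (\<forall>M1\<in>Ps!i. \<forall>M2\<in>Ps!i. M1 \<noteq> M2 \<longrightarrow> avg_sim S M1 M2 \<le> avg_sim S N1 N2))"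
    using run unfolding avg_linkage_run_def by (elim conjE)
  have "\<exists>N1 N2. N1 \<in> Ps!i \<and> N2 \<in> Ps!i \<and> N1 \<noteq> N2 \<and>
           Ps!(Suc i) = insert (N1 \<union> N2) (Ps!i - {N1, N2}) \<and>
           (\<forall>M1\<in>Ps!i. \<forall>M2\<in>Ps!i. M1 \<noteq> M2 \<longrightarrow> avg_sim S M1 M2 \<le> avg_sim S N1 N2)"
    using H[rule_format, OF si] .
  then show ?thesis apply (elim exE conjE) apply (rule that) by assumption+
qed

lemma node_in: "N \<in> tree_nodes Ps \<longleftrightarrow> (\<exists>i<length Ps. N \<in> Ps!i)"
  unfolding tree_nodes_def by (auto simp: in_set_conv_nth) (metis nth_mem)

lemma node_props: "tree_ok X Cstar Ps \<Longrightarrow> N \<in> tree_nodes Ps \<Longrightarrow> N \<noteq> {} \<and> N \<subseteq> X \<and> lam Cstar N"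
  unfolding node_in tree_ok_def using clus_ne clus_sub by blast

lemma nodes_finite: "finite X \<Longrightarrow> tree_ok X Cstar Ps \<Longrightarrow> finite (tree_nodes Ps)"
  by (rule finite_subset[of _ "Pow X"]) (auto dest: node_props)

lemma depth_lt:
  assumes "finite (tree_nodes Ps)" "N \<in> tree_nodes Ps" "M \<subset> N"
  shows "node_depth Ps N < node_depth Ps M"
proof -
  have "{K \<in> tree_nodes Ps. N \<subset> K} \<subset> {K \<in> tree_nodes Ps. M \<subset> K}"
    using assms by auto
  then show ?thesis unfolding node_depth_def
    by (rule psubset_card_mono[rotated]) (use assms in simp)
qed

lemma target_node:
  assumes run: "avg_linkage_run S X Ps" and ok: "tree_ok X Cstar Ps"
    and clS: "is_clustering X Cstar" and l: "l \<in> Cstar"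
  shows "l \<in> tree_nodes Ps"
proof (rule ccontr)
  assume nl: "l \<notin> tree_nodes Ps"
  obtain x where x: "x \<in> l" using clus_ne[OF clS l] by blast
  have lX: "l \<subseteq> X" using clus_sub[OF clS l] .
  have ne: "Ps \<noteq> []" using run unfolding avg_linkage_run_def by blast
  have C: "i < length Ps \<Longrightarrow> \<exists>n\<in>Ps!i. x \<in> n \<and> n \<subseteq> l" for i
  proof (induction i)
    case 0
    have "Ps!0 = (\<lambda>x. {x}) ` X" using run unfolding avg_linkage_run_def by (metis hd_conv_nth)
    then show ?case using x lX by auto
  next
    case (Suc i)
    then obtain n where n: "n \<in> Ps!i" "x \<in> n" "n \<subseteq> l" by auto
    have "n \<noteq> l" using nl n(1) Suc.prems node_in by force
    obtain N1 N2 where N: "N1 \<in> Ps!i" "N2 \<in> Ps!i" "N1 \<noteq> N2"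
      and eq: "Ps!Suc i = insert (N1 \<union> N2) (Ps!i - {N1, N2})"
      using run_step[OF run Suc.prems] by blast
    have cl: "is_clustering X (Ps!i)" and lams: "\<forall>n\<in>Ps!i. lam Cstar n"
      using ok Suc.prems Suc_lessD unfolding tree_ok_def by blast+
    have "N1 \<union> N2 \<in> Ps!Suc i" by (simp add: eq)
    then have lamU: "lam Cstar (N1 \<union> N2)" using ok Suc.prems unfolding tree_ok_def by blast
    have d: "N1 \<inter> N2 = {}" using clus_disj[OF cl N] .
    have key: "N1 \<union> N2 \<subseteq> l" if a: "Na = n" "Na \<in> {N1,N2}" "Nb \<in> {N1,N2}" "Na \<noteq> Nb" for Na Nb
    proof -
      have lb: "Nb \<inter> l = {} \<or> Nb \<subseteq> l \<or> l \<subseteq> Nb" using lams a N l unfolding lam_def by blast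
      have nab: "Na \<inter> Nb = {}" using a d by blast
      have nbne: "Nb \<noteq> {}" using clus_ne[OF cl] a N by blast
      have U: "N1 \<union> N2 = Na \<union> Nb" using a N by blast
      have lu: "(Na \<union> Nb) \<inter> l = {} \<or> Na \<union> Nb \<subseteq> l \<or> l \<subseteq> Na \<union> Nb" using lamU l U unfolding lam_def by blast
      show ?thesis using lb lu nab nbne U a n x \<open>n \<noteq> l\<close> by blast
    qed
    show ?case
    proof (cases "n \<in> {N1, N2}")
      case True
      then have "N1 \<union> N2 \<subseteq> l" using key[of N1 N2] key[of N2 N1] N by blast
      moreover have "x \<in> N1 \<union> N2" using True n by blast
      moreover have "N1 \<union> N2 \<in> Ps!Suc i" by (simp add: eq)
      ultimately show ?thesis by blast
    next
      case False
      then have "n \<in> Ps!Suc i" using n(1) by (simp add: eq)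
      then show ?thesis using n by blast
    qed
  qed
  have "last Ps = Ps!(length Ps - 1)" using ne by (simp add: last_conv_nth)
  moreover have "last Ps = {X}" using run unfolding avg_linkage_run_def by blast
  ultimately have "\<exists>n\<in>{X}. x \<in> n \<and> n \<subseteq> l" using C[of "length Ps - 1"] ne by simp
  then have "l = X" using lX by blast
  moreover have "X \<in> tree_nodes Ps"
  proof -
    have "last Ps \<in> set Ps" using ne by simp
    then show ?thesis using \<open>last Ps = {X}\<close> unfolding tree_nodes_def by (metis UnionI singletonI)
  qed
  ultimately show False using nl by blast
qed




lemma sc_sym: "same_cluster P u v = same_cluster P v u"
  unfolding same_cluster_def by blast

definition errs :: "'a set \<Rightarrow> 'a set set \<Rightarrow> 'a set set \<Rightarrow> ('a \<times> 'a) set" where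
  "errs X P Q = {(u,v) \<in> X \<times> X. same_cluster P u v \<noteq> same_cluster Q u v}"

lemma delta_errs: "delta_cc X P Q = card (errs X P Q)"
  unfolding delta_cc_def errs_def by simp

lemma errs_finite: "finite X \<Longrightarrow> finite (errs X P Q)"
  unfolding errs_def by (rule finite_subset[of _ "X \<times> X"]) auto

lemma split_dec:
  assumes finX: "finite X" and clS: "is_clustering X Cstar" and ok: "tree_ok X Cstar Ps"
    and clP: "is_clustering X P" and sp: "split_step Ps Cstar P P'"
  shows "is_clustering X P' \<and> delta_cc X P' Cstar < delta_cc X P Cstar"
proof -
  obtain Ci N N1 N2 where Ci: "Ci \<in> P"
    and imp: "\<exists>l1\<in>Cstar. \<exists>l2\<in>Cstar. l1 \<noteq> l2 \<and> Ci \<inter> l1 \<noteq> {} \<and> Ci \<inter> l2 \<noteq> {}"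
    and dc: "deepest_containing Ps Ci N" and tc: "tree_children Ps N N1 N2"
    and P': "P' = (P - {Ci}) \<union> ({Ci \<inter> N1, Ci \<inter> N2} - {{}})"
    using sp unfolding split_step_def by blast
  have memP': "C \<in> P' \<longleftrightarrow> (C \<in> P \<and> C \<noteq> Ci) \<or> ((C = Ci \<inter> N1 \<or> C = Ci \<inter> N2) \<and> C \<noteq> {})" for C
    unfolding P' by blast
  from tc obtain i where si: "Suc i < length Ps" and N: "N1 \<in> Ps!i" "N2 \<in> Ps!i" "N1 \<noteq> N2"
    and NU: "N = N1 \<union> N2"
    unfolding tree_children_def by blast
  have cli: "is_clustering X (Ps!i)" and lami: "\<forall>n\<in>Ps!i. lam Cstar n"
    using ok si Suc_lessD unfolding tree_ok_def by blast+
  have d12: "N1 \<inter> N2 = {}" using clus_disj[OF cli N] .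
  have N1t: "N1 \<in> tree_nodes Ps" and N2t: "N2 \<in> tree_nodes Ps"
    using node_in si N Suc_lessD by blast+
  have finT: "finite (tree_nodes Ps)" using nodes_finite[OF finX ok] .
  have CiN: "Ci \<subseteq> N" and Nt: "N \<in> tree_nodes Ps"
    and deep: "\<forall>M\<in>tree_nodes Ps. Ci \<subseteq> M \<longrightarrow> node_depth Ps M \<le> node_depth Ps N"
    using dc unfolding deepest_containing_def by auto
  have a1: "Ci \<inter> N1 \<noteq> {}"
  proof
    assume "Ci \<inter> N1 = {}"
    then have "Ci \<subseteq> N2" using CiN NU by blast
    moreover have "N2 \<subset> N" using NU d12 clus_ne[OF cli N(1)] by blast
    ultimately show False using depth_lt[OF finT Nt, of N2] deep N2t by force
  qed
  have a2: "Ci \<inter> N2 \<noteq> {}"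
  proof
    assume "Ci \<inter> N2 = {}"
    then have "Ci \<subseteq> N1" using CiN NU by blast
    moreover have "N1 \<subset> N" using NU d12 clus_ne[OF cli N(2)] by blast
    ultimately show False using depth_lt[OF finT Nt, of N1] deep N1t by force
  qed
  have sep: "\<not> same_cluster Cstar u v" if uv: "u \<in> Ci \<inter> N1" "v \<in> Ci \<inter> N2" for u v
  proof
    assume "same_cluster Cstar u v"
    then obtain T where T: "T \<in> Cstar" "u \<in> T" "v \<in> T" unfolding same_cluster_def by blast
    have "N1 \<inter> T = {} \<or> N1 \<subseteq> T \<or> T \<subseteq> N1" using lami N(1) T(1) unfolding lam_def by blast
    then have "N1 \<subseteq> T" using uv T d12 by blast
    moreover have "N2 \<inter> T = {} \<or> N2 \<subseteq> T \<or> T \<subseteq> N2" using lami N(2) T(1) unfolding lam_def by blast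
    then have "N2 \<subseteq> T" using uv T d12 by blast
    ultimately have CT: "Ci \<subseteq> T" using CiN NU by blast
    from imp obtain l1 l2 where l: "l1 \<in> Cstar" "l2 \<in> Cstar" "l1 \<noteq> l2" "Ci \<inter> l1 \<noteq> {}" "Ci \<inter> l2 \<noteq> {}"
      by blast
    have "T = l1" using clus_disj[OF clS T(1) l(1)] CT l(4) by blast
    moreover have "T = l2" using clus_disj[OF clS T(1) l(2)] CT l(5) by blast
    ultimately show False using l(3) by simp
  qed
  define sp where "sp u v \<longleftrightarrow> (u \<in> Ci \<inter> N1 \<and> v \<in> Ci \<inter> N2) \<or> (u \<in> Ci \<inter> N2 \<and> v \<in> Ci \<inter> N1)" for u v
  have sepsp: "\<not> same_cluster Cstar u v" if "sp u v" for u v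
    using that sep sc_sym[of Cstar u v] unfolding sp_def by metis
  have Cdisj: "C \<inter> Ci = {}" if "C \<in> P" "C \<noteq> Ci" for C using clus_disj[OF clP that(1) Ci that(2)] .
  have scP': "same_cluster P' u v \<longleftrightarrow> same_cluster P u v \<and> \<not> sp u v" for u v
  proof
    assume "same_cluster P' u v"
    then obtain C' where C': "C' \<in> P'" "u \<in> C'" "v \<in> C'" unfolding same_cluster_def by blast
    show "same_cluster P u v \<and> \<not> sp u v"
    proof (cases "C' \<in> P - {Ci}")
      case True
      then have "u \<notin> Ci" using Cdisj C' by blast
      then show ?thesis using True C' unfolding same_cluster_def sp_def by blast
    next
      case False
      then have "C' = Ci \<inter> N1 \<or> C' = Ci \<inter> N2" using C'(1) memP' by blast
      then show ?thesis using C' Ci d12 unfolding same_cluster_def sp_def by blast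
    qed
  next
    assume a: "same_cluster P u v \<and> \<not> sp u v"
    then obtain C where C: "C \<in> P" "u \<in> C" "v \<in> C" unfolding same_cluster_def by blast
    show "same_cluster P' u v"
    proof (cases "C = Ci")
      case False
      then have "C \<in> P'" using C memP' by blast
      then show ?thesis using C unfolding same_cluster_def by blast
    next
      case True
      then have "u \<in> N1 \<union> N2" "v \<in> N1 \<union> N2" using C CiN NU by auto
      then have "(u \<in> Ci \<inter> N1 \<and> v \<in> Ci \<inter> N1) \<or> (u \<in> Ci \<inter> N2 \<and> v \<in> Ci \<inter> N2)"
        using a C True unfolding sp_def by blast
      moreover have m: "Ci \<inter> N1 \<in> P'" "Ci \<inter> N2 \<in> P'" using a1 a2 by (simp_all add: memP')
      ultimately show ?thesis unfolding same_cluster_def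
        by (elim disjE; intro bexI[OF _ m(1)] bexI[OF _ m(2)]; simp)
    qed
  qed
  have clP': "is_clustering X P'"
    unfolding is_clustering_def
  proof (intro conjI ballI impI)
    have "\<Union>P' = \<Union>P"
    proof
      show "\<Union>P' \<subseteq> \<Union>P" using memP' Ci by blast
      show "\<Union>P \<subseteq> \<Union>P'"
      proof
        fix x assume "x \<in> \<Union>P"
        then obtain C where C: "C \<in> P" "x \<in> C" by blast
        show "x \<in> \<Union>P'"
        proof (cases "C = Ci")
          case True
          then have "x \<in> Ci \<inter> N1 \<or> x \<in> Ci \<inter> N2" using C CiN NU by blast
          moreover have "Ci \<inter> N1 \<in> P'" "Ci \<inter> N2 \<in> P'" using a1 a2 by (simp_all add: memP')
          ultimately show ?thesis by blast
        next
          case False then have "C \<in> P'" using memP' C by blast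
          then show ?thesis using C by blast
        qed
      qed
    qed
    then show "\<Union>P' = X" using clP unfolding is_clustering_def by simp
    show "{} \<notin> P'" using memP' clus_ne[OF clP] by blast
    fix A B assume AB: "A \<in> P'" "B \<in> P'" "A \<noteq> B"
    show "A \<inter> B = {}"
    proof (cases "A \<in> P - {Ci}")
      case True
      show ?thesis
      proof (cases "B \<in> P - {Ci}")
        case True then show ?thesis using \<open>A \<in> P - {Ci}\<close> clus_disj[OF clP] AB by blast
      next
        case False then have "B \<subseteq> Ci" using AB memP' by blast
        then show ?thesis using Cdisj \<open>A \<in> P - {Ci}\<close> by blast
      qed
    next
      case False
      then have Asub: "A = Ci \<inter> N1 \<or> A = Ci \<inter> N2" using AB memP' by blast
      show ?thesis
      proof (cases "B \<in> P - {Ci}")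
        case True then show ?thesis using Asub Cdisj by blast
      next
        case False then have "B = Ci \<inter> N1 \<or> B = Ci \<inter> N2" using AB memP' by blast
        then show ?thesis using Asub AB d12 by blast
      qed
    qed
  qed
  have sub: "errs X P' Cstar \<subset> errs X P Cstar"
  proof
    show "errs X P' Cstar \<subseteq> errs X P Cstar"
      unfolding errs_def using scP' sepsp by auto
    obtain u v where uv: "u \<in> Ci \<inter> N1" "v \<in> Ci \<inter> N2" using a1 a2 by blast
    have X: "u \<in> X" "v \<in> X" using uv clus_sub[OF clP Ci] by auto
    have "sp u v" using uv unfolding sp_def by blast
    moreover have "same_cluster P u v" using uv Ci unfolding same_cluster_def by blast
    ultimately have "(u,v) \<in> errs X P Cstar" "(u,v) \<notin> errs X P' Cstar"
      using sepsp scP' X unfolding errs_def by auto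
    then show "errs X P' Cstar \<noteq> errs X P Cstar" by blast
  qed
  have "card (errs X P' Cstar) < card (errs X P Cstar)"
    by (rule psubset_card_mono[OF errs_finite[OF finX] sub])
  then show ?thesis using clP' unfolding delta_errs by simp
qed


lemma card_split: "finite E \<Longrightarrow> card E = card (E - Q) + card (E \<inter> Q)"
  by (metis Diff_Diff_Int Diff_subset card_Diff_subset card_mono add_diff_inverse_nat
      finite_Diff linorder_not_le Int_lower1 card_Int_Diff inf_commute)

lemma merge_dec:
  assumes finX: "finite X" and clS: "is_clustering X Cstar" and clP: "is_clustering X P"
    and A: "A \<in> P" and B: "B \<in> P" and AB: "A \<noteq> B" and cAB: "card B \<le> card A"
    and l: "l \<in> Cstar" and eta: "eta > 2/3" and eA: "eta_ok eta l A" and eB: "eta_ok eta N B"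
    and Nl: "N \<subseteq> l"
    and P': "P' = (P - {A, B}) \<union> ({A \<union> (N \<inter> B), B - N} - {{}})"
  shows "is_clustering X P' \<and> delta_cc X P' Cstar < delta_cc X P Cstar"
proof -
  define M where "M = N \<inter> B"
  have BN: "B - N = B - M" unfolding M_def by blast
  have MB: "M \<subseteq> B" and Ml: "M \<subseteq> l" using Nl unfolding M_def by auto
  have dAB: "A \<inter> B = {}" using clus_disj[OF clP A B AB] .
  have AX: "A \<subseteq> X" and BX: "B \<subseteq> X" and lX: "l \<subseteq> X"
    using clus_sub[OF clP A] clus_sub[OF clP B] clus_sub[OF clS l] by auto
  have finA: "finite A" and finB: "finite B" using AX BX finX finite_subset by auto
  have cB: "card B > 0" using finB clus_ne[OF clP B] by (simp add: card_gt_0_iff)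
  have cA: "card A > 0" using cB cAB by simp
  have cM: "real (card M) \<ge> eta * card B" using eB unfolding eta_ok_def M_def by (simp add: Int_commute)
  have cl: "real (card (l \<inter> A)) \<ge> eta * card A" using eA unfolding eta_ok_def .
  have Mne: "M \<noteq> {}"
  proof
    assume "M = {}"
    then have "eta * card B \<le> 0" using cM by simp
    moreover have "eta * card B > 0" using eta cB by simp
    ultimately show False by simp
  qed
  have memP': "C \<in> P' \<longleftrightarrow> (C \<in> P \<and> C \<noteq> A \<and> C \<noteq> B) \<or> C = A \<union> M \<or> (C = B - M \<and> C \<noteq> {})" for C
    unfolding P' M_def using clus_ne[OF clP A] by blast
  have Cdisj: "C \<inter> A = {} \<and> C \<inter> B = {}" if "C \<in> P" "C \<noteq> A" "C \<noteq> B" for C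
    using clus_disj[OF clP that(1) A that(2)] clus_disj[OF clP that(1) B that(3)] by blast
  have AMP: "A \<union> M \<in> P'" by (simp add: memP')
  have clP': "is_clustering X P'"
    unfolding is_clustering_def
  proof (intro conjI ballI impI)
    show "\<Union>P' = X"
    proof
      have subX: "C \<subseteq> X" if "C \<in> P'" for C
        using that unfolding memP' using clus_sub[OF clP] AX BX MB by (elim disjE conjE) auto
      then show "\<Union>P' \<subseteq> X" by blast
      show "X \<subseteq> \<Union>P'"
      proof
        fix x assume "x \<in> X"
        then obtain C where C: "C \<in> P" "x \<in> C" using clus_ex[OF clP] by blast
        consider "C = A" | "C = B" "x \<in> M" | "C = B" "x \<notin> M" | "C \<in> P" "C \<noteq> A" "C \<noteq> B" using C by blast
        then show "x \<in> \<Union>P'"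
        proof cases
          case 1 then show ?thesis using AMP C by blast
        next
          case 2 then show ?thesis using AMP by blast
        next
          case 3
          then have "B - M \<in> P'" using C by (simp add: memP') blast
          then show ?thesis using 3 C by blast
        next
          case 4 then have "C \<in> P'" by (simp add: memP')
          then show ?thesis using C by blast
        qed
      qed
    qed
    have "{} \<notin> P" using clus_ne[OF clP] by blast
    then show "{} \<notin> P'" using memP' clus_ne[OF clP A] by simp
    fix C D assume CD: "C \<in> P'" "D \<in> P'" "C \<noteq> D"
    have cases: "(E \<in> P \<and> E \<noteq> A \<and> E \<noteq> B) \<or> E = A \<union> M \<or> E = B - M" if "E \<in> P'" for E
      using that memP' by blast
    have dis1: "(A \<union> M) \<inter> (B - M) = {}" using dAB by blast
    have dis2: "E \<inter> (A \<union> M) = {} \<and> E \<inter> (B - M) = {}" if "E \<in> P" "E \<noteq> A" "E \<noteq> B" for E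
      using Cdisj[OF that] MB by blast
    show "C \<inter> D = {}"
      using cases[OF CD(1)] cases[OF CD(2)] CD(3) dis1 dis2 clus_disj[OF clP]
      by (elim disjE conjE; simp add: Int_commute; blast)
  qed
  have scM: "same_cluster P u v \<longleftrightarrow> v \<in> B" if "u \<in> M" for u v
    using clus_sc[OF clP B] that MB by blast
  have scM': "same_cluster P' u v \<longleftrightarrow> v \<in> A \<union> M" if "u \<in> M" for u v
    using clus_sc[OF clP' AMP] that by blast
  have scS: "same_cluster Cstar u v \<longleftrightarrow> v \<in> l" if "u \<in> M" for u v
    using clus_sc[OF clS l] that Ml by blast
  have scout: "same_cluster P' u v \<longleftrightarrow> same_cluster P u v" if uvs: "u \<in> X" "u \<notin> M" "v \<notin> M" for u v
  proof -
    obtain C where C: "C \<in> P" "u \<in> C" using clus_ex[OF clP uvs(1)] by blast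
    consider "C = A" | "C = B" | "C \<noteq> A" "C \<noteq> B" by blast
    then show ?thesis
    proof cases
      case 1
      then show ?thesis using clus_sc[OF clP' AMP, of u v] clus_sc[OF clP A, of u v] C uvs by blast
    next
      case 2
      then have BM: "B - M \<in> P'" using C uvs by (simp add: memP') blast
      show ?thesis using clus_sc[OF clP' BM, of u v] clus_sc[OF clP B, of u v] C uvs 2 by blast
    next
      case 3
      then have CP: "C \<in> P'" using C by (simp add: memP')
      then show ?thesis using clus_sc[OF clP' CP, of u v] clus_sc[OF clP C(1), of u v] C by blast
    qed
  qed
  define err where "err = {v \<in> X - M. (v \<in> B) \<noteq> (v \<in> l)}"
  define err' where "err' = {v \<in> X - M. (v \<in> A \<union> M) \<noteq> (v \<in> l)}"
  define Q1 where "Q1 = M \<times> (X - M)"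
  define Q2 where "Q2 = (X - M) \<times> M"
  define E where "E = errs X P Cstar"
  define E' where "E' = errs X P' Cstar"
  have MX: "M \<subseteq> X" using MB BX by blast
  have EQ: "E - (Q1 \<union> Q2) = E' - (Q1 \<union> Q2)"
  proof -
    have "(u,v) \<in> E \<longleftrightarrow> (u,v) \<in> E'" if "(u,v) \<notin> Q1 \<union> Q2" for u v
    proof (cases "u \<in> M")
      case True
      then have "v \<in> X \<longrightarrow> v \<in> M" using that unfolding Q1_def by blast
      then show ?thesis using scM[OF True] scM'[OF True] True MB
        unfolding E_def E'_def errs_def by auto
    next
      case False
      then have "u \<in> X \<longrightarrow> v \<in> X \<longrightarrow> v \<notin> M" using that MX unfolding Q2_def by blast
      then show ?thesis using scout[of u v] False unfolding E_def E'_def errs_def by auto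
    qed
    then show ?thesis by auto
  qed
  have E1: "E \<inter> Q1 = M \<times> err" and E1': "E' \<inter> Q1 = M \<times> err'"
    unfolding E_def E'_def errs_def Q1_def err_def err'_def using scM scM' scS MX by auto
  have E2: "E \<inter> Q2 = err \<times> M" and E2': "E' \<inter> Q2 = err' \<times> M"
  proof -
    have r: "same_cluster P v u \<longleftrightarrow> v \<in> B" "same_cluster P' v u \<longleftrightarrow> v \<in> A \<union> M"
      "same_cluster Cstar v u \<longleftrightarrow> v \<in> l" if "u \<in> M" for u v
      using scM[OF that] scM'[OF that] scS[OF that] sc_sym[of P] sc_sym[of P'] sc_sym[of Cstar] by metis+
    show "E \<inter> Q2 = err \<times> M" "E' \<inter> Q2 = err' \<times> M"
      unfolding E_def E'_def errs_def Q2_def err_def err'_def using r MX by auto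
  qed
  have finE: "finite E" "finite E'" unfolding E_def E'_def using errs_finite[OF finX] by auto
  have Qd: "Q1 \<inter> Q2 = {}" unfolding Q1_def Q2_def by blast
  have finM: "finite M" using MX finX finite_subset by blast
  have finerr: "finite err" "finite err'" unfolding err_def err'_def using finX by auto
  have cardQ: "card (F \<inter> (Q1 \<union> Q2)) = card (F \<inter> Q1) + card (F \<inter> Q2)" if "finite F" for F
  proof -
    have "F \<inter> (Q1 \<union> Q2) = (F \<inter> Q1) \<union> (F \<inter> Q2)" by blast
    then show ?thesis using card_Un_disjoint[of "F \<inter> Q1" "F \<inter> Q2"] that Qd by auto
  qed
  have errlt: "card err' < card err"
  proof -
    have s1: "(l \<inter> A) \<union> (l - A - B) \<subseteq> err" unfolding err_def using lX MB dAB by blast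
    have "card ((l \<inter> A) \<union> (l - A - B)) = card (l \<inter> A) + card (l - A - B)"
      by (rule card_Un_disjoint) (use finX lX finite_subset[of _ X] in auto)
    then have g1: "card (l \<inter> A) + card (l - A - B) \<le> card err"
      using card_mono[OF finerr(1) s1] by simp
    have s2: "err' \<subseteq> (A - l) \<union> (B - M) \<union> (l - A - B)" unfolding err'_def by blast
    have "card err' \<le> card ((A - l) \<union> (B - M) \<union> (l - A - B))"
      by (rule card_mono[OF _ s2]) (use finA finB finX lX finite_subset in auto)
    also have "\<dots> \<le> card (A - l) + card (B - M) + card (l - A - B)"
      by (metis add_le_mono1 card_Un_le order_trans)
    finally have g2: "card err' \<le> card (A - l) + card (B - M) + card (l - A - B)" .
    have g3: "card (l \<inter> A) + card (A - l) = card A"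
      using card_Int_Diff[OF finA, of l] by (simp add: Int_commute)
    have g4: "card (B - M) = card B - card M" using card_Diff_subset[OF finM MB] .
    have g5: "card M \<le> card B" using card_mono[OF finB MB] .
    have r: "real (card (B - M)) = real (card B) - real (card M)" using g4 g5 by simp
    have "card (l \<inter> A) \<le> card A" using card_mono[OF finA] by simp
    then have "eta * card A \<le> 1 * card A" using cl by linarith
    then have e1: "eta \<le> 1" using cA by simp
    have "(1 - eta) * card B \<le> (1 - eta) * card A" using cAB e1 by (intro mult_left_mono) auto
    then have h0: "real (card B) - eta * card B \<le> real (card A) - eta * card A"
      by (simp add: algebra_simps)
    have "(3 * eta - 2) * card A > 0" using eta cA by (intro mult_pos_pos) auto
    then have h2: "3 * (eta * card A) - 2 * card A > 0" by (simp add: algebra_simps)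
    have h1: "real (card (A - l)) = real (card A) - real (card (l \<inter> A))" using g3 by linarith
    have "real (card (A - l)) + real (card (B - M)) < real (card (l \<inter> A))"
      using h0 h1 h2 r cM cl by linarith
    then show ?thesis using g1 g2 by linarith
  qed
  have "card E' = card (E' - (Q1 \<union> Q2)) + card (E' \<inter> Q1) + card (E' \<inter> Q2)"
    using card_split[OF finE(2), of "Q1 \<union> Q2"] cardQ[OF finE(2)] by simp
  also have "\<dots> = card (E - (Q1 \<union> Q2)) + card M * card err' + card err' * card M"
    using EQ E1' E2' by (simp add: card_cartesian_product)
  also have "\<dots> < card (E - (Q1 \<union> Q2)) + card M * card err + card err * card M"
  proof -
    have "card M > 0" using finM Mne by (simp add: card_gt_0_iff)
    then have a: "card M * card err' < card M * card err" using errlt by simp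
    show ?thesis using add_strict_mono[OF a a] by (simp add: mult.commute)
  qed
  also have "\<dots> = card E"
    using card_split[OF finE(1), of "Q1 \<union> Q2"] cardQ[OF finE(1)] E1 E2
    by (simp add: card_cartesian_product)
  finally show ?thesis using clP' unfolding delta_errs E_def E'_def by simp
qed


lemma merge_step_dec:
  assumes finX: "finite X" and clS: "is_clustering X Cstar" and ok: "tree_ok X Cstar Ps"
    and run: "avg_linkage_run S X Ps" and clP: "is_clustering X P" and eta: "eta > 2/3"
    and ms: "merge_step eta Ps Cstar P P'"
  shows "is_clustering X P' \<and> delta_cc X P' Cstar < delta_cc X P Cstar"
proof -
  obtain Ci Cj l N where C: "Ci \<in> P" "Cj \<in> P" "Ci \<noteq> Cj"
    and l: "l \<in> Cstar" "eta_ok eta l Ci" "eta_ok eta l Cj"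
    and Nt: "N \<in> tree_nodes Ps" and eN: "eta_ok eta N Ci" "eta_ok eta N Cj"
    and deep: "\<forall>M\<in>tree_nodes Ps. eta_ok eta M Ci \<and> eta_ok eta M Cj \<longrightarrow> node_depth Ps M \<le> node_depth Ps N"
    and P': "P' = (if card Ci \<ge> card Cj
              then (P - {Ci, Cj}) \<union> ({Ci \<union> (N \<inter> Cj), Cj - N} - {{}})
              else (P - {Ci, Cj}) \<union> ({Ci - N, Cj \<union> (N \<inter> Ci)} - {{}}))"
    using ms unfolding merge_step_def by (elim bexE exE conjE) blast
  have Nl: "N \<subseteq> l"
  proof -
    have finCi: "finite Ci" using clus_sub[OF clP C(1)] finX finite_subset by blast
    have cCi: "card Ci > 0" using finCi clus_ne[OF clP C(1)] by (simp add: card_gt_0_iff)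
    have "real (card (N \<inter> Ci)) + real (card (l \<inter> Ci)) \<ge> 2 * eta * card Ci"
      using eN(1) l(2) unfolding eta_ok_def by linarith
    moreover have "2 * eta * card Ci > card Ci" using eta cCi by simp
    ultimately have gt: "card (N \<inter> Ci) + card (l \<inter> Ci) > card Ci" by linarith
    have "card (N \<inter> Ci) + card (l \<inter> Ci) = card ((N \<inter> Ci) \<union> (l \<inter> Ci)) + card ((N \<inter> Ci) \<inter> (l \<inter> Ci))"
      by (rule card_Un_Int) (use finCi in auto)
    moreover have "card ((N \<inter> Ci) \<union> (l \<inter> Ci)) \<le> card Ci" by (rule card_mono[OF finCi]) blast
    ultimately have "card ((N \<inter> Ci) \<inter> (l \<inter> Ci)) > 0" using gt by linarith
    then have Nli: "N \<inter> l \<noteq> {}" by (metis card.empty inf_bot_left inf_commute inf_left_commute less_irrefl)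
    have "lam Cstar N" using node_props[OF ok Nt] by blast
    then have "N \<inter> l = {} \<or> N \<subseteq> l \<or> l \<subseteq> N" using l(1) unfolding lam_def by blast
    moreover have "\<not> l \<subset> N"
    proof
      assume lN: "l \<subset> N"
      have lt: "l \<in> tree_nodes Ps" using target_node[OF run ok clS l(1)] .
      have "node_depth Ps N < node_depth Ps l" using depth_lt[OF nodes_finite[OF finX ok] Nt lN] .
      moreover have "node_depth Ps l \<le> node_depth Ps N" using deep lt l by blast
      ultimately show False by simp
    qed
    ultimately show ?thesis using Nli by blast
  qed
  show ?thesis
  proof (cases "card Ci \<ge> card Cj")
    case True
    then have "P' = (P - {Ci, Cj}) \<union> ({Ci \<union> (N \<inter> Cj), Cj - N} - {{}})" using P' by simp
    then show ?thesis
      using merge_dec[OF finX clS clP C(1) C(2) C(3) True l(1) eta l(2) eN(2) Nl] by blast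
  next
    case False
    then have "P' = (P - {Cj, Ci}) \<union> ({Cj \<union> (N \<inter> Ci), Ci - N} - {{}})" using P' by (simp add: insert_commute)
    moreover have "card Ci \<le> card Cj" using False by simp
    ultimately show ?thesis
      using merge_dec[OF finX clS clP C(2) C(1) C(3)[symmetric] _ l(1) eta l(3) eN(1) Nl] by blast
  qed
qed

theorem theorem15:
  fixes X :: "'a set" and S :: "'a \<Rightarrow> 'a \<Rightarrow> real"
    and Cstar C0 :: "'a set set" and Ps :: "'a set set list"
    and eta :: real and Cs :: "'a set set list"
  assumes "finite X"
    and "\<forall>x\<in>X. \<forall>y\<in>X. S x y = S y x"
    and "is_clustering X Cstar"
    and "target_stable S Cstar"
    and "is_clustering X C0"
    and "avg_linkage_run S X Ps"
    and "eta > 2/3"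
    and "Cs \<noteq> []" and "hd Cs = C0"
    and "\<forall>t. Suc t < length Cs \<longrightarrow> edit_step eta Ps Cstar (Cs!t) (Cs!Suc t)"
    and "\<forall>t. Suc t < length Cs \<longrightarrow> Cs!t \<noteq> Cstar"
  shows "length Cs - 1 \<le> delta_cc X C0 Cstar"
proof -
  have ok: "tree_ok X Cstar Ps" using tree_ok[OF assms(1,2,3,4,6)] .
  have step: "is_clustering X P' \<and> delta_cc X P' Cstar < delta_cc X P Cstar"
    if "is_clustering X P" "edit_step eta Ps Cstar P P'" for P P'
    using that split_dec[OF assms(1,3) ok] merge_step_dec[OF assms(1,3) ok assms(6) _ assms(7)]
    unfolding edit_step_def by blast
  have inv: "t < length Cs \<Longrightarrow> is_clustering X (Cs!t) \<and> delta_cc X (Cs!t) Cstar + t \<le> delta_cc X C0 Cstar" for t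
  proof (induction t)
    case 0
    have "Cs!0 = C0" using assms(8,9) by (metis hd_conv_nth)
    then show ?case using assms(5) by simp
  next
    case (Suc t)
    then have IH: "is_clustering X (Cs!t)" "delta_cc X (Cs!t) Cstar + t \<le> delta_cc X C0 Cstar" by auto
    have "edit_step eta Ps Cstar (Cs!t) (Cs!Suc t)" using assms(10) Suc.prems by blast
    then have "is_clustering X (Cs!Suc t) \<and> delta_cc X (Cs!Suc t) Cstar < delta_cc X (Cs!t) Cstar"
      using step IH(1) by blast
    then show ?case using IH(2) by simp
  qed
  have "length Cs - 1 < length Cs" using assms(8) by simp
  from inv[OF this] show ?thesis by simp
qed

end
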